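(* For each $n$, let $W\in\mathbb{R}^{n\times n}$ be a random symmetric matrix with zero diagonal whose entries $W_{ij}$, $i<j$, are independent Rademacher random variables (uniform on $\{-1,+1\}$), and let $T=-\frac{\sqrt{n}}{4}\mathrm{Id}_{n\times n}+W$. Then, with probability tending to $1$ as $n\to\infty$, one has $\pi_+(T)\geq \frac{1}{3}$.
   Context: For a self-adjoint matrix $T\in\mathbb{C}^{n\times n}$, $$\pi_+(T):=\sup\left\{\operatorname{Tr}(TA):A\in\mathbb{C}^{n\times n},\ A\succeq 0,\ \|A\|_1=1\right\},$$ where $A\succeq0$ means positive semidefinite and $\|A\|_1=\sum_{i,j}|A_{ij}|$ is the entrywise $1$-norm. *)

theory Defs
  imports Complex_Main "HOL-Library.FuncSet"
begin

text \<open>Square n x n complex matrices are represented as functions nat => nat => complex;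
  only the entries with indices below n matter.\<close>

definition psd :: "nat \<Rightarrow> (nat \<Rightarrow> nat \<Rightarrow> complex) \<Rightarrow> bool" where
  "psd n A \<longleftrightarrow>
     (\<forall>i<n. \<forall>j<n. A j i = cnj (A i j)) \<and>
     (\<forall>v :: nat \<Rightarrow> complex. 0 \<le> Re (\<Sum>i<n. \<Sum>j<n. cnj (v i) * A i j * v j))"

definition entry_norm1 :: "nat \<Rightarrow> (nat \<Rightarrow> nat \<Rightarrow> complex) \<Rightarrow> real" where
  "entry_norm1 n A = (\<Sum>i<n. \<Sum>j<n. cmod (A i j))"

definition mtrace_prod :: "nat \<Rightarrow> (nat \<Rightarrow> nat \<Rightarrow> complex) \<Rightarrow> (nat \<Rightarrow> nat \<Rightarrow> complex) \<Rightarrow> complex" where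
  "mtrace_prod n T A = (\<Sum>i<n. \<Sum>j<n. T i j * A j i)"

text \<open>pi_plus; for self-adjoint T and PSD A the trace Tr(TA) is real, so taking Re is harmless.\<close>
definition pi_plus :: "nat \<Rightarrow> (nat \<Rightarrow> nat \<Rightarrow> complex) \<Rightarrow> real" where
  "pi_plus n T = Sup {Re (mtrace_prod n T A) | A. psd n A \<and> entry_norm1 n A = 1}"

definition upper_pairs :: "nat \<Rightarrow> (nat \<times> nat) set" where
  "upper_pairs n = {(i, j). i < j \<and> j < n}"

definition sign_patterns :: "nat \<Rightarrow> (nat \<times> nat \<Rightarrow> real) set" where
  "sign_patterns n = PiE (upper_pairs n) (\<lambda>_. {-1, 1})"

definition W_mat :: "(nat \<times> nat \<Rightarrow> real) \<Rightarrow> nat \<Rightarrow> nat \<Rightarrow> real" where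
  "W_mat s i j = (if i < j then s (i, j) else if j < i then s (j, i) else 0)"

definition T_mat :: "nat \<Rightarrow> (nat \<times> nat \<Rightarrow> real) \<Rightarrow> nat \<Rightarrow> nat \<Rightarrow> complex" where
  "T_mat n s i j = complex_of_real ((if i = j then - sqrt (real n) / 4 else 0) + W_mat s i j)"

end

theory Submission
  imports Defs
begin


abbreviation W where "W \<equiv> W_mat"

lemma W_flip:
  assumes "x < y"
  shows "W_mat (s((x,y) := - s(x,y))) a b = (if {a,b} = {x,y} then - W_mat s a b else W_mat s a b)"
  using assms unfolding W_mat_def
  by (cases "a < b"; cases "b < a") (auto simp: doubleton_eq_iff)

lemma W_sym: "W_mat s i j = W_mat s j i"
  unfolding W_mat_def by auto

lemma W_diag[simp]: "W_mat s i i = 0"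
  unfolding W_mat_def by auto

lemma sp_val: "s \<in> sign_patterns n \<Longrightarrow> i < j \<Longrightarrow> j < n \<Longrightarrow> s (i,j) = -1 \<or> s (i,j) = 1"
  unfolding sign_patterns_def upper_pairs_def by (auto simp: PiE_def Pi_def)

lemma W_sq: "s \<in> sign_patterns n \<Longrightarrow> i < n \<Longrightarrow> j < n \<Longrightarrow> i \<noteq> j \<Longrightarrow> (W_mat s i j)^2 = 1"
  unfolding W_mat_def using sp_val[of s n i j] sp_val[of s n j i]
  by (cases "i < j") auto

lemma W_abs: "s \<in> sign_patterns n \<Longrightarrow> i < n \<Longrightarrow> j < n \<Longrightarrow> \<bar>W_mat s i j\<bar> \<le> 1"
  using W_sq[of s n i j] by (cases "i = j") (auto simp: abs_square_eq_1)

lemma sp_finite: "finite (sign_patterns n)"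
  unfolding sign_patterns_def upper_pairs_def
  by (rule finite_PiE) (auto intro: finite_subset[of _ "{..<n} \<times> {..<n}"])

lemma sp_nonempty: "sign_patterns n \<noteq> {}"
  unfolding sign_patterns_def by (simp add: PiE_eq_empty_iff)

lemma flip_sum_zero:
  fixes g :: "(nat \<times> nat \<Rightarrow> real) \<Rightarrow> real"
  assumes "x < y" "y < n" "\<And>s. g (s((x,y) := - s(x,y))) = - g s"
  shows "(\<Sum>s\<in>sign_patterns n. g s) = 0"
proof -
  let ?S = "sign_patterns n"
  let ?f = "\<lambda>s::nat\<times>nat\<Rightarrow>real. s((x,y) := - s(x,y))"
  have mem: "?f s \<in> ?S" if "s \<in> ?S" for s
  proof -
    have "(x,y) \<in> upper_pairs n" using assms by (auto simp: upper_pairs_def)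
    then show ?thesis using that unfolding sign_patterns_def
      by (auto simp: PiE_def Pi_def extensional_def)
  qed
  have "(\<Sum>s\<in>?S. g s) = (\<Sum>s\<in>?S. g (?f s))"
    by (rule sum.reindex_bij_witness[of _ ?f ?f]) (auto simp: mem)
  also have "\<dots> = - (\<Sum>s\<in>?S. g s)" by (simp add: assms(3) sum_negf)
  finally show ?thesis by simp
qed



lemma mm_set: "{min a b, max a b} = {a, b::nat}" by (auto simp: min_def max_def)

lemma edge_zero:
  fixes g :: "(nat \<times> nat \<Rightarrow> real) \<Rightarrow> real"
  assumes "a \<noteq> b" "a < n" "b < n"
    and "\<And>s. g (s((min a b, max a b) := - s(min a b, max a b))) = - g s"
  shows "(\<Sum>s\<in>sign_patterns n. g s) = 0"
  using assms by (intro flip_sum_zero[of "min a b" "max a b" n]) (auto simp: min_def max_def)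

lemma W_flip': "a \<noteq> b \<Longrightarrow> W_mat (s((min a b, max a b) := - s(min a b, max a b))) c d =
   (if {c,d} = {a,b} then - W_mat s c d else W_mat s c d)"
  by (subst W_flip) (auto simp: min_def max_def mm_set)

lemma tri_zero:
  assumes "a \<notin> {i,j,k}" "a < n" "b < n" "c < n"
  shows "(\<Sum>s\<in>sign_patterns n. (W_mat s i j * W_mat s j k * W_mat s k i) *
            (W_mat s a b * W_mat s b c * W_mat s c a)) = 0"
proof (cases "a = b \<or> b = c \<or> c = a")
  case True then show ?thesis by auto
next
  case False
  show ?thesis
    by (rule edge_zero[of a b]) (use assms False in \<open>auto simp: W_flip' doubleton_eq_iff\<close>)
qed



definition X3 :: "nat \<Rightarrow> (nat \<times> nat \<times> nat) set" where
  "X3 n = {..<n} \<times> {..<n} \<times> {..<n}"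

definition tri :: "(nat \<times> nat \<Rightarrow> real) \<Rightarrow> nat \<times> nat \<times> nat \<Rightarrow> real" where
  "tri s t = (case t of (i,j,k) \<Rightarrow> W_mat s i j * W_mat s j k * W_mat s k i)"

definition V3 :: "nat \<times> nat \<times> nat \<Rightarrow> nat set" where
  "V3 t = (case t of (i,j,k) \<Rightarrow> {i,j,k})"

definition T3 :: "nat \<Rightarrow> (nat \<times> nat \<Rightarrow> real) \<Rightarrow> real" where
  "T3 n s = (\<Sum>t\<in>X3 n. tri s t)"

lemma prod_le1:
  fixes x :: real
  shows "\<bar>x\<bar> \<le> 1 \<Longrightarrow> \<bar>y\<bar> \<le> 1 \<Longrightarrow> \<bar>x * y\<bar> \<le> 1"
  by (simp add: abs_mult mult_le_one)

lemma tri_abs: "s \<in> sign_patterns n \<Longrightarrow> t \<in> X3 n \<Longrightarrow> \<bar>tri s t\<bar> \<le> 1"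
  unfolding tri_def X3_def by (auto intro!: prod_le1 W_abs)

lemma sum_le_card:
  fixes f :: "_ \<Rightarrow> real"
  assumes "\<And>s. s \<in> S \<Longrightarrow> \<bar>f s\<bar> \<le> 1"
  shows "(\<Sum>s\<in>S. f s) \<le> real (card S)"
proof -
  have "(\<Sum>s\<in>S. f s) \<le> (\<Sum>s\<in>S. 1)" by (rule sum_mono) (use assms abs_le_D1 in blast)
  then show ?thesis by simp
qed

lemma tri_pair:
  assumes "t \<in> X3 n" "u \<in> X3 n"
  shows "(\<Sum>s\<in>sign_patterns n. tri s t * tri s u) \<le>
     real (card (sign_patterns n)) * (if u \<in> (V3 t \<times> V3 t \<times> V3 t) then 1 else 0)"
proof -
  obtain i j k where t: "t = (i,j,k)" by (cases t) auto
  obtain a b c where u: "u = (a,b,c)" by (cases u) auto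
  have lt: "i < n" "j < n" "k < n" "a < n" "b < n" "c < n" using assms t u by (auto simp: X3_def)
  show ?thesis
  proof (cases "a \<in> {i,j,k} \<and> b \<in> {i,j,k} \<and> c \<in> {i,j,k}")
    case True
    have "(\<Sum>s\<in>sign_patterns n. tri s t * tri s u) \<le> real (card (sign_patterns n))"
      by (rule sum_le_card) (use assms in \<open>auto intro!: prod_le1 tri_abs\<close>)
    moreover have "u \<in> V3 t \<times> V3 t \<times> V3 t" unfolding mem_Times_iff using True by (simp add: t u V3_def)
    ultimately show ?thesis by simp
  next
    case False
    have z: "(\<Sum>s\<in>sign_patterns n. tri s t * tri s u) = 0"
    proof -
      consider "a \<notin> {i,j,k}" | "b \<notin> {i,j,k}" | "c \<notin> {i,j,k}" using False by blast
      then show ?thesis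
      proof cases
        case 1 then show ?thesis using tri_zero[of a i j k n b c] lt by (simp add: tri_def t u)
      next
        case 2 then show ?thesis using tri_zero[of b i j k n c a] lt by (simp add: tri_def t u mult_ac)
      next
        case 3 then show ?thesis using tri_zero[of c i j k n a b] lt by (simp add: tri_def t u mult_ac)
      qed
    qed
    have "u \<notin> V3 t \<times> V3 t \<times> V3 t" unfolding mem_Times_iff using False by (simp add: t u V3_def)
    then show ?thesis by (simp add: z)
  qed
qed

lemma card3: "card (V3 t \<times> V3 t \<times> V3 t) \<le> 27"
proof -
  obtain a b c where t: "t = (a,b,c)" by (cases t) auto
  have "card (V3 t) \<le> 3" using card_length[of "[a,b,c]"] by (simp add: V3_def t)
  then have "card (V3 t) * (card (V3 t) * card (V3 t)) \<le> 3 * (3 * 3)"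
    by (intro mult_mono) auto
  then show ?thesis by (simp only: card_cartesian_product)
qed

lemma T3_moment:
  "(\<Sum>s\<in>sign_patterns n. (T3 n s)^2) \<le> 27 * real n ^ 3 * real (card (sign_patterns n))"
proof -
  let ?S = "sign_patterns n" let ?N = "real (card ?S)"
  have fin: "finite (X3 n)" by (simp add: X3_def)
  have "(\<Sum>s\<in>?S. (T3 n s)^2) = (\<Sum>s\<in>?S. \<Sum>t\<in>X3 n. \<Sum>u\<in>X3 n. tri s t * tri s u)"
    by (simp add: T3_def power2_eq_square sum_product)
  also have "\<dots> = (\<Sum>t\<in>X3 n. \<Sum>u\<in>X3 n. \<Sum>s\<in>?S. tri s t * tri s u)"
    by (subst sum.swap) (simp add: sum.swap[of _ ?S])
  also have "\<dots> \<le> (\<Sum>t\<in>X3 n. \<Sum>u\<in>X3 n. ?N * (if u \<in> (V3 t \<times> V3 t \<times> V3 t) then 1 else 0))"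
    by (intro sum_mono tri_pair) auto
  also have "\<dots> \<le> (\<Sum>t\<in>X3 n. ?N * 27)"
  proof (intro sum_mono)
    fix t assume "t \<in> X3 n"
    let ?V = "V3 t \<times> V3 t \<times> V3 t"
    obtain i j k where t: "t = (i,j,k)" by (cases t) auto
    have "card (X3 n \<inter> ?V) \<le> card ?V"
      by (rule card_mono) (auto simp: V3_def t split: prod.splits)
    also have "\<dots> \<le> 27" by (rule card3)
    finally have c27: "?N * real (card (X3 n \<inter> ?V)) \<le> ?N * 27" by (intro mult_left_mono) auto
    have "(\<Sum>u\<in>X3 n. ?N * (if u \<in> ?V then 1 else 0)) = ?N * real (card (X3 n \<inter> ?V))"
      by (simp add: sum_distrib_left[symmetric] sum.If_cases fin)
    also note c27
    finally show "(\<Sum>u\<in>X3 n. ?N * (if u \<in> ?V then 1 else 0)) \<le> ?N * 27" .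
  qed
  also have "\<dots> = 27 * real n ^ 3 * ?N" by (simp add: X3_def card_cartesian_product power3_eq_cube)
  finally show ?thesis .
qed



definition X4 :: "nat \<Rightarrow> (nat \<times> nat \<times> nat \<times> nat) set" where
  "X4 n = {..<n} \<times> {..<n} \<times> {..<n} \<times> {..<n}"

definition V4 :: "nat \<times> nat \<times> nat \<times> nat \<Rightarrow> nat set" where
  "V4 t = (case t of (i,j,k,l) \<Rightarrow> {i,j,k,l})"

definition c4 :: "(nat \<times> nat \<Rightarrow> real) \<Rightarrow> nat \<times> nat \<times> nat \<times> nat \<Rightarrow> real" where
  "c4 s t = (case t of (i,j,k,l) \<Rightarrow>
     if i \<noteq> j \<and> k \<noteq> l then W_mat s i k * W_mat s k j * W_mat s i l * W_mat s l j else 0)"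

definition C4 :: "nat \<Rightarrow> (nat \<times> nat \<Rightarrow> real) \<Rightarrow> real" where
  "C4 n s = (\<Sum>t\<in>X4 n. c4 s t)"

definition cyc where "cyc s a b c d = W_mat s a b * W_mat s b c * W_mat s c d * W_mat s d a"

lemma cyc_zero:
  assumes "a \<notin> {i,j,k,l}" "a < n" "b < n" "c < n" "d < n"
    "a \<noteq> b" "a \<noteq> c" "a \<noteq> d" "b \<noteq> c" "b \<noteq> d" "c \<noteq> d"
  shows "(\<Sum>s\<in>sign_patterns n. (W_mat s i k * W_mat s k j * W_mat s i l * W_mat s l j) *
            cyc s a b c d) = 0"
  unfolding cyc_def
  by (rule edge_zero[of a b]) (use assms in \<open>auto simp: W_flip' doubleton_eq_iff\<close>)

lemma c4_abs: "s \<in> sign_patterns n \<Longrightarrow> t \<in> X4 n \<Longrightarrow> \<bar>c4 s t\<bar> \<le> 1"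
  unfolding c4_def X4_def by (auto intro!: prod_le1 W_abs)

lemma c4_cyc: "c4 s (a,b,c,d) = (if a \<noteq> b \<and> c \<noteq> d then cyc s a c b d else 0)"
  unfolding c4_def cyc_def using W_sym[of s a d] W_sym[of s d b] by (simp add: mult_ac)

lemma cyc_rot: "cyc s a b c d = cyc s b c d a" unfolding cyc_def by (simp add: mult_ac)

lemma card4: "card (V4 t \<times> V4 t \<times> V4 t \<times> V4 t) \<le> 256"
proof -
  obtain a b c d where t: "t = (a,b,c,d)" by (cases t) auto
  have "card (V4 t) \<le> 4" using card_length[of "[a,b,c,d]"] by (simp add: V4_def t)
  then have "card (V4 t) * (card (V4 t) * (card (V4 t) * card (V4 t))) \<le> 4 * (4 * (4 * 4))"
    by (intro mult_mono) auto
  then show ?thesis by (simp only: card_cartesian_product)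
qed

lemma c4_pair:
  assumes "t \<in> X4 n" "u \<in> X4 n"
  shows "(\<Sum>s\<in>sign_patterns n. c4 s t * c4 s u) \<le>
     real (card (sign_patterns n)) * (if u \<in> V4 t \<times> V4 t \<times> V4 t \<times> V4 t then 1 else 0)"
proof -
  obtain i j k l where t: "t = (i,j,k,l)" by (cases t) auto
  obtain a b c d where u: "u = (a,b,c,d)" by (cases u) auto
  have lt: "i < n" "j < n" "k < n" "l < n" "a < n" "b < n" "c < n" "d < n"
    using assms t u by (auto simp: X4_def)
  show ?thesis
  proof (cases "a \<in> {i,j,k,l} \<and> b \<in> {i,j,k,l} \<and> c \<in> {i,j,k,l} \<and> d \<in> {i,j,k,l}")
    case True
    have "(\<Sum>s\<in>sign_patterns n. c4 s t * c4 s u) \<le> real (card (sign_patterns n))"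
      by (rule sum_le_card) (use assms in \<open>auto intro!: prod_le1 c4_abs\<close>)
    moreover have "u \<in> V4 t \<times> V4 t \<times> V4 t \<times> V4 t" unfolding mem_Times_iff using True by (simp add: t u V4_def)
    ultimately show ?thesis by simp
  next
    case False
    have z: "(\<Sum>s\<in>sign_patterns n. c4 s t * c4 s u) = 0"
    proof (cases "i \<noteq> j \<and> k \<noteq> l \<and> a \<noteq> b \<and> c \<noteq> d \<and> a \<noteq> c \<and> c \<noteq> b \<and> a \<noteq> d \<and> d \<noteq> b")
      case False
      then have "\<And>s. c4 s t * c4 s u = 0" unfolding t u c4_cyc cyc_def by auto
      then show ?thesis by (intro sum.neutral) auto
    next
      case dist: True
      have e: "c4 s t * c4 s u = (W_mat s i k * W_mat s k j * W_mat s i l * W_mat s l j) * cyc s a c b d" for s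
        using dist unfolding t u c4_cyc by (simp add: cyc_def W_sym[of s j l] W_sym[of s l i] mult_ac)
      consider "a \<notin> {i,j,k,l}" | "b \<notin> {i,j,k,l}" | "c \<notin> {i,j,k,l}" | "d \<notin> {i,j,k,l}" using False by blast
      then show ?thesis
      proof cases
        case 1 then show ?thesis unfolding e using cyc_zero[of a i j k l n c b d] lt dist by auto
      next
        case 2 then show ?thesis unfolding e using cyc_zero[of b i j k l n d a c] lt dist
          by (auto simp: cyc_rot[of _ a c b d] cyc_rot[of _ c b d a] cyc_rot[of _ b d a c])
      next
        case 3 then show ?thesis unfolding e using cyc_zero[of c i j k l n b d a] lt dist
          by (auto simp: cyc_rot[of _ a c b d])
      next
        case 4 then show ?thesis unfolding e using cyc_zero[of d i j k l n a c b] lt dist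
          by (auto simp: cyc_rot[of _ a c b d] cyc_rot[of _ c b d a] cyc_rot[of _ b d a c])
      qed
    qed
    have "u \<notin> V4 t \<times> V4 t \<times> V4 t \<times> V4 t" unfolding mem_Times_iff using False by (simp add: t u V4_def)
    then show ?thesis by (simp add: z)
  qed
qed

lemma C4_moment:
  "(\<Sum>s\<in>sign_patterns n. (C4 n s)^2) \<le> 256 * real n ^ 4 * real (card (sign_patterns n))"
proof -
  let ?S = "sign_patterns n" let ?N = "real (card ?S)"
  have fin: "finite (X4 n)" by (simp add: X4_def)
  have "(\<Sum>s\<in>?S. (C4 n s)^2) = (\<Sum>s\<in>?S. \<Sum>t\<in>X4 n. \<Sum>u\<in>X4 n. c4 s t * c4 s u)"
    by (simp add: C4_def power2_eq_square sum_product)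
  also have "\<dots> = (\<Sum>t\<in>X4 n. \<Sum>u\<in>X4 n. \<Sum>s\<in>?S. c4 s t * c4 s u)"
    by (subst sum.swap) (simp add: sum.swap[of _ ?S])
  also have "\<dots> \<le> (\<Sum>t\<in>X4 n. \<Sum>u\<in>X4 n. ?N * (if u \<in> V4 t \<times> V4 t \<times> V4 t \<times> V4 t then 1 else 0))"
    by (intro sum_mono c4_pair) auto
  also have "\<dots> \<le> (\<Sum>t\<in>X4 n. ?N * 256)"
  proof (intro sum_mono)
    fix t assume "t \<in> X4 n"
    let ?V = "V4 t \<times> V4 t \<times> V4 t \<times> V4 t"
    obtain i j k l where t: "t = (i,j,k,l)" by (cases t) auto
    have "card (X4 n \<inter> ?V) \<le> card ?V"
      by (rule card_mono) (auto simp: V4_def t split: prod.splits)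
    also have "\<dots> \<le> 256" by (rule card4)
    finally have c27: "?N * real (card (X4 n \<inter> ?V)) \<le> ?N * 256" by (intro mult_left_mono) auto
    have "(\<Sum>u\<in>X4 n. ?N * (if u \<in> ?V then 1 else 0)) = ?N * real (card (X4 n \<inter> ?V))"
      by (simp add: sum_distrib_left[symmetric] sum.If_cases fin)
    also note c27
    finally show "(\<Sum>u\<in>X4 n. ?N * (if u \<in> ?V then 1 else 0)) \<le> ?N * 256" .
  qed
  also have "\<dots> = 256 * real n ^ 4 * ?N" by (simp add: X4_def card_cartesian_product power4_eq_xxxx)
  finally show ?thesis .
qed



definition Mm :: "real \<Rightarrow> (nat \<times> nat \<Rightarrow> real) \<Rightarrow> nat \<Rightarrow> nat \<Rightarrow> real" where
  "Mm r s i j = (if i = j then r else 0) + W_mat s i j"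

definition Qm :: "nat \<Rightarrow> (nat \<times> nat \<Rightarrow> real) \<Rightarrow> nat \<Rightarrow> nat \<Rightarrow> real" where
  "Qm n s i j = (\<Sum>k<n. W_mat s i k * W_mat s k j)"

definition Am :: "nat \<Rightarrow> real \<Rightarrow> (nat \<times> nat \<Rightarrow> real) \<Rightarrow> nat \<Rightarrow> nat \<Rightarrow> real" where
  "Am n r s i j = (\<Sum>k<n. Mm r s i k * Mm r s k j)"

lemma Am_eq:
  assumes "i < n" "j < n"
  shows "Am n r s i j = (if i = j then r * r else 0) + 2 * r * W_mat s i j + Qm n s i j"
proof -
  have e: "Mm r s i k * Mm r s k j = (if k = i then r * Mm r s k j else 0)
      + (if k = j then r * W_mat s i k else 0) + W_mat s i k * W_mat s k j" for k
    unfolding Mm_def by (auto simp: algebra_simps)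
  show ?thesis unfolding Am_def e sum.distrib Qm_def using assms
    by (simp add: Mm_def algebra_simps W_sym[of s j i])
qed

lemma Qm_diag:
  assumes "s \<in> sign_patterns n" "i < n"
  shows "Qm n s i i = real n - 1"
proof -
  have "Qm n s i i = (\<Sum>k<n. if k = i then 0 else 1)"
    unfolding Qm_def
    by (rule sum.cong) (use assms W_sq[of s n i] in \<open>auto simp: W_sym[of s _ i] power2_eq_square\<close>)
  also have "\<dots> = real (card ({..<n} - {i}))"
    by (simp add: sum.If_cases Diff_eq Compl_eq)
  also have "\<dots> = real n - 1" using assms by (simp add: of_nat_diff)
  finally show ?thesis .
qed



lemma sum_WW:
  assumes "s \<in> sign_patterns n"
  shows "(\<Sum>i<n. \<Sum>j<n. W_mat s i j * W_mat s j i) = real n * (real n - 1)"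
proof -
  have "(\<Sum>i<n. \<Sum>j<n. W_mat s i j * W_mat s j i) = (\<Sum>i<n. Qm n s i i)" by (simp add: Qm_def)
  also have "\<dots> = (\<Sum>i<n. real n - 1)" using Qm_diag[OF assms] by simp
  finally show ?thesis by simp
qed

lemma T3_nested: "T3 n s = (\<Sum>i<n. \<Sum>j<n. \<Sum>k<n. W_mat s i j * W_mat s j k * W_mat s k i)"
  unfolding T3_def X3_def tri_def by (simp add: sum.cartesian_product)

lemma trace_A:
  assumes "s \<in> sign_patterns n"
  shows "(\<Sum>i<n. Am n r s i i) = real n * (r * r + real n - 1)"
  using assms by (simp add: Am_eq Qm_diag)

lemma cross_A:
  assumes "s \<in> sign_patterns n"
  shows "(\<Sum>i<n. \<Sum>j<n. W_mat s i j * Am n r s j i) = 2 * r * (real n * (real n - 1)) + T3 n s"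
proof -
  have "(\<Sum>i<n. \<Sum>j<n. W_mat s i j * Am n r s j i) =
     (\<Sum>i<n. \<Sum>j<n. 2 * r * (W_mat s i j * W_mat s j i) + W_mat s i j * Qm n s j i)"
    by (intro sum.cong refl) (auto simp: Am_eq algebra_simps)
  also have "\<dots> = 2 * r * (\<Sum>i<n. \<Sum>j<n. W_mat s i j * W_mat s j i) + (\<Sum>i<n. \<Sum>j<n. W_mat s i j * Qm n s j i)"
    by (simp add: sum.distrib sum_distrib_left)
  also have "(\<Sum>i<n. \<Sum>j<n. W_mat s i j * Qm n s j i) = T3 n s"
    unfolding T3_nested Qm_def by (simp add: sum_distrib_left mult_ac)
  finally show ?thesis using sum_WW[OF assms] by simp
qed

definition Tr :: "nat \<Rightarrow> (nat \<times> nat \<Rightarrow> real) \<Rightarrow> nat \<Rightarrow> nat \<Rightarrow> real" where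
  "Tr n s i j = (if i = j then - sqrt (real n) / 4 else 0) + W_mat s i j"

lemma T_A:
  assumes "s \<in> sign_patterns n"
  shows "(\<Sum>i<n. \<Sum>j<n. Tr n s i j * Am n r s j i) =
     - sqrt (real n) / 4 * (real n * (r * r + real n - 1)) + 2 * r * (real n * (real n - 1)) + T3 n s"
proof -
  have "(\<Sum>i<n. \<Sum>j<n. Tr n s i j * Am n r s j i) =
      (\<Sum>i<n. \<Sum>j<n. (if i = j then - sqrt (real n) / 4 * Am n r s j i else 0)) +
      (\<Sum>i<n. \<Sum>j<n. W_mat s i j * Am n r s j i)"
  proof -
    have "Tr n s i j * Am n r s j i = (if i = j then - sqrt (real n) / 4 * Am n r s j i else 0) + W_mat s i j * Am n r s j i" for i j
      unfolding Tr_def by (simp add: algebra_simps)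
    then show ?thesis by (simp only: sum.distrib)
  qed
  also have "(\<Sum>i<n. \<Sum>j<n. (if i = j then - sqrt (real n) / 4 * Am n r s j i else 0)) =
     - sqrt (real n) / 4 * (\<Sum>i<n. Am n r s i i)"
    by (simp add: sum_distrib_left)
  finally show ?thesis using trace_A[OF assms] cross_A[OF assms] by simp
qed



lemma absA_bound:
  assumes "s \<in> sign_patterns n" "i < n" "j < n" "r \<ge> 0" "r * r = real n"
  shows "\<bar>Am n r s i j\<bar> \<le> (if i = j then 2 * real n - 1 else 0) + 2 * r + (if i = j then 0 else \<bar>Qm n s i j\<bar>)"
proof (cases "i = j")
  case True
  then have "Am n r s i j = 2 * real n - 1" using assms by (simp add: Am_eq Qm_diag)
  moreover have "real n \<ge> 1" using assms by simp
  ultimately show ?thesis using True assms by simp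
next
  case False
  have "\<bar>2 * r * W_mat s i j\<bar> \<le> 2 * r" using W_abs[OF assms(1-3)] assms(4)
    by (simp add: abs_mult mult_left_le)
  then show ?thesis using False assms by (simp add: Am_eq)
qed

lemma L1_bound:
  assumes "s \<in> sign_patterns n" "r \<ge> 0" "r * r = real n"
  shows "(\<Sum>i<n. \<Sum>j<n. \<bar>Am n r s i j\<bar>) \<le> real n * (2 * real n - 1) + 2 * r * (real n * real n)
           + (\<Sum>i<n. \<Sum>j<n. if i = j then 0 else \<bar>Qm n s i j\<bar>)"
proof -
  have "(\<Sum>i<n. \<Sum>j<n. \<bar>Am n r s i j\<bar>) \<le> (\<Sum>i<n. \<Sum>j<n. (if i = j then 2 * real n - 1 else 0) + 2 * r + (if i = j then 0 else \<bar>Qm n s i j\<bar>))"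
    by (intro sum_mono absA_bound) (use assms in auto)
  also have "\<dots> = real n * (2 * real n - 1) + 2 * r * (real n * real n)
           + (\<Sum>i<n. \<Sum>j<n. if i = j then 0 else \<bar>Qm n s i j\<bar>)"
  proof -
    have a: "(\<Sum>i<n. \<Sum>j<n. (if i = j then 2 * real n - 1 else 0) + 2 * r + (if i = j then 0 else \<bar>Qm n s i j\<bar>))
      = (\<Sum>i<n. \<Sum>j<n. (if i = j then 2 * real n - 1 else 0)) + (\<Sum>i<n. \<Sum>j<n. 2 * r)
        + (\<Sum>i<n. \<Sum>j<n. if i = j then 0 else \<bar>Qm n s i j\<bar>)"
      by (simp only: sum.distrib)
    show ?thesis unfolding a by simp
  qed
  finally show ?thesis .
qed

lemma Q_abs_sq:
  assumes "r > 0" "r * r = real n"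
  shows "2 * r * (\<Sum>i<n. \<Sum>j<n. if i = j then 0 else \<bar>Qm n s i j\<bar>) \<le>
    (\<Sum>i<n. \<Sum>j<n. if i = j then 0 else (Qm n s i j)^2) + real n * (real n * real n)"
proof -
  have p: "2 * r * (if i = j then 0 else \<bar>Qm n s i j\<bar>) \<le> (if i = j then 0 else (Qm n s i j)^2) + real n" for i j
  proof -
    have "0 \<le> (\<bar>Qm n s i j\<bar> - r)^2" by simp
    then show ?thesis using assms by (auto simp: power2_eq_square algebra_simps)
  qed
  have "2 * r * (\<Sum>i<n. \<Sum>j<n. if i = j then 0 else \<bar>Qm n s i j\<bar>) =
     (\<Sum>i<n. \<Sum>j<n. 2 * r * (if i = j then 0 else \<bar>Qm n s i j\<bar>))" by (simp add: sum_distrib_left)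
  also have "\<dots> \<le> (\<Sum>i<n. \<Sum>j<n. (if i = j then 0 else (Qm n s i j)^2) + real n)"
    by (intro sum_mono p)
  also have "\<dots> = (\<Sum>i<n. \<Sum>j<n. if i = j then 0 else (Qm n s i j)^2) + real n * (real n * real n)"
    by (simp add: sum.distrib)
  finally show ?thesis .
qed

lemma C4_nested: "C4 n s = (\<Sum>i<n. \<Sum>j<n. \<Sum>k<n. \<Sum>l<n. c4 s (i,j,k,l))"
  unfolding C4_def X4_def by (simp add: sum.cartesian_product)

lemma Q_sq:
  assumes "s \<in> sign_patterns n"
  shows "(\<Sum>i<n. \<Sum>j<n. if i = j then 0 else (Qm n s i j)^2) \<le> real n * (real n * real n) + C4 n s"
proof -
  have sq: "(Qm n s i j)^2 = (\<Sum>k<n. \<Sum>l<n. W_mat s i k * W_mat s k j * (W_mat s i l * W_mat s l j))" for i j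
    unfolding Qm_def power2_eq_square by (simp add: sum_product)
  have p: "(if i = j then 0 else W_mat s i k * W_mat s k j * (W_mat s i l * W_mat s l j))
      \<le> c4 s (i,j,k,l) + (if k = l then 1 else 0)" if "i < n" "j < n" "k < n" "l < n" for i j k l
  proof -
    have "\<bar>W_mat s i k * W_mat s k j * (W_mat s i l * W_mat s l j)\<bar> \<le> 1"
      using that assms by (intro prod_le1 W_abs) auto
    then show ?thesis unfolding c4_def by (auto simp: mult_ac)
  qed
  have "(\<Sum>i<n. \<Sum>j<n. if i = j then 0 else (Qm n s i j)^2) =
     (\<Sum>i<n. \<Sum>j<n. \<Sum>k<n. \<Sum>l<n. if i = j then 0 else W_mat s i k * W_mat s k j * (W_mat s i l * W_mat s l j))"
    by (intro sum.cong refl) (simp only: sq split: if_split, simp)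
  also have "\<dots> \<le> (\<Sum>i<n. \<Sum>j<n. \<Sum>k<n. \<Sum>l<n. c4 s (i,j,k,l) + (if k = l then 1 else 0))"
    by (intro sum_mono p) auto
  also have "\<dots> = C4 n s + real n * (real n * real n)"
    by (simp add: sum.distrib C4_nested)
  finally show ?thesis by simp
qed



lemma gram_nonneg:
  fixes M :: "nat \<Rightarrow> nat \<Rightarrow> real"
  assumes sym: "\<And>i k. i < n \<Longrightarrow> k < n \<Longrightarrow> M k i = M i k"
  shows "0 \<le> Re (\<Sum>i<n. \<Sum>j<n. cnj (v i) * complex_of_real (\<Sum>k<n. M i k * M k j) * v j)"
proof -
  define u where "u k = (\<Sum>j<n. complex_of_real (M k j) * v j)" for k
  have c: "(\<Sum>i<n. cnj (v i) * complex_of_real (M i k)) = cnj (u k)" if "k < n" for k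
  proof -
    have "(\<Sum>i<n. cnj (v i) * complex_of_real (M i k)) = (\<Sum>i<n. cnj (complex_of_real (M k i) * v i))"
      by (intro sum.cong refl) (simp add: sym[OF _ that] mult.commute)
    then show ?thesis unfolding u_def by (simp only: cnj_sum)
  qed
  have p: "cnj (v i) * complex_of_real (\<Sum>k<n. M i k * M k j) * v j
      = (\<Sum>k<n. cnj (v i) * complex_of_real (M i k) * (complex_of_real (M k j) * v j))" for i j
  proof -
    have "cnj (v i) * complex_of_real (\<Sum>k<n. M i k * M k j) * v j
       = (\<Sum>k<n. cnj (v i) * complex_of_real (M i k * M k j) * v j)"
      by (simp only: of_real_sum sum_distrib_left sum_distrib_right)
    also have "\<dots> = (\<Sum>k<n. cnj (v i) * complex_of_real (M i k) * (complex_of_real (M k j) * v j))"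
      by (intro sum.cong refl) (simp only: of_real_mult mult.assoc)
    finally show ?thesis .
  qed
  have "(\<Sum>i<n. \<Sum>j<n. cnj (v i) * complex_of_real (\<Sum>k<n. M i k * M k j) * v j)
      = (\<Sum>i<n. \<Sum>j<n. \<Sum>k<n. cnj (v i) * complex_of_real (M i k) * (complex_of_real (M k j) * v j))"
    by (simp only: p)
  also have "\<dots> = (\<Sum>i<n. \<Sum>k<n. \<Sum>j<n. cnj (v i) * complex_of_real (M i k) * (complex_of_real (M k j) * v j))"
    by (rule sum.cong[OF refl], rule sum.swap)
  also have "\<dots> = (\<Sum>k<n. \<Sum>i<n. \<Sum>j<n. cnj (v i) * complex_of_real (M i k) * (complex_of_real (M k j) * v j))"
    by (rule sum.swap)
  also have "\<dots> = (\<Sum>k<n. (\<Sum>i<n. cnj (v i) * complex_of_real (M i k)) * u k)"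
    unfolding u_def sum_distrib_left sum_distrib_right
    by (rule sum.cong[OF refl], rule trans[OF sum.swap], rule sum.cong[OF refl], rule sum.cong[OF refl]) (simp only: mult.assoc)
  also have "\<dots> = (\<Sum>k<n. cnj (u k) * u k)" by (intro sum.cong refl) (simp add: c)
  finally have e: "(\<Sum>i<n. \<Sum>j<n. cnj (v i) * complex_of_real (\<Sum>k<n. M i k * M k j) * v j) = (\<Sum>k<n. cnj (u k) * u k)" .
  show ?thesis unfolding e Re_sum by (intro sum_nonneg) simp
qed



lemma Qm_sym: "Qm n s j i = Qm n s i j"
  unfolding Qm_def by (intro sum.cong refl) (metis W_sym mult.commute)

lemma Am_sym: "i < n \<Longrightarrow> j < n \<Longrightarrow> Am n r s j i = Am n r s i j"
  by (simp add: Am_eq Qm_sym[of n s j i] W_sym[of s j i])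

lemma psd_Am:
  assumes "c \<ge> 0"
  shows "psd n (\<lambda>i j. complex_of_real (c * Am n r s i j))"
  unfolding psd_def
proof (intro conjI allI impI)
  fix i j assume "i < n" "j < n"
  then show "complex_of_real (c * Am n r s j i) = cnj (complex_of_real (c * Am n r s i j))"
    by (simp add: Am_sym)
next
  fix v :: "nat \<Rightarrow> complex"
  have g: "0 \<le> Re (\<Sum>i<n. \<Sum>j<n. cnj (v i) * complex_of_real (Am n r s i j) * v j)"
    unfolding Am_def by (rule gram_nonneg) (metis Mm_def W_sym)
  have "(\<Sum>i<n. \<Sum>j<n. cnj (v i) * complex_of_real (c * Am n r s i j) * v j)
     = complex_of_real c * (\<Sum>i<n. \<Sum>j<n. cnj (v i) * complex_of_real (Am n r s i j) * v j)"
    by (simp add: sum_distrib_left mult_ac)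
  then show "0 \<le> Re (\<Sum>i<n. \<Sum>j<n. cnj (v i) * complex_of_real (c * Am n r s i j) * v j)"
    using g assms by simp
qed

lemma pi_bdd:
  "bdd_above {Re (mtrace_prod n T A) | A. psd n A \<and> entry_norm1 n A = 1}"
proof (rule bdd_aboveI[of _ "\<Sum>i<n. \<Sum>j<n. cmod (T i j)"], clarify)
  fix A assume "psd n A" and e1: "entry_norm1 n A = 1"
  have le1: "cmod (A j i) \<le> 1" if "i < n" "j < n" for i j
  proof -
    have "cmod (A j i) \<le> (\<Sum>i'<n. cmod (A j i'))" by (rule member_le_sum) (use that in auto)
    also have "\<dots> \<le> (\<Sum>j'<n. \<Sum>i'<n. cmod (A j' i'))"
      by (rule member_le_sum[where f="\<lambda>j'. \<Sum>i'<n. cmod (A j' i')"]) (use that in \<open>auto intro: sum_nonneg\<close>)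
    finally show ?thesis using e1 by (simp add: entry_norm1_def)
  qed
  have "Re (mtrace_prod n T A) \<le> cmod (mtrace_prod n T A)" by (rule complex_Re_le_cmod)
  also have "\<dots> \<le> (\<Sum>i<n. cmod (\<Sum>j<n. T i j * A j i))" unfolding mtrace_prod_def by (rule norm_sum)
  also have "\<dots> \<le> (\<Sum>i<n. \<Sum>j<n. cmod (T i j * A j i))" by (intro sum_mono norm_sum)
  also have "\<dots> \<le> (\<Sum>i<n. \<Sum>j<n. cmod (T i j))"
    by (intro sum_mono) (auto simp: norm_mult intro: mult_left_le le1)
  finally show "Re (mtrace_prod n T A) \<le> (\<Sum>i<n. \<Sum>j<n. cmod (T i j))" .
qed



lemma poly_ineq:
  fixes r :: real assumes "r \<ge> 10"
  shows "2 * r * ((r*r) * (2 * (r*r) - 1) + 2 * r * ((r*r) * (r*r))) + 9/4 * ((r*r) * ((r*r) * (r*r)))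
     \<le> 6 * r * (- (r / 4) * ((r*r) * (r * r + r*r - 1)) + 2 * r * ((r*r) * (r*r - 1)) - r * ((r*r) * (r*r)) / 4)"
proof -
  have k: "5/4 * (r*r) - 4 * r - 21/2 \<ge> 0"
  proof -
    have "r * r \<ge> 10 * r" using assms by (intro mult_right_mono) auto
    then show ?thesis using assms by linarith
  qed
  have p: "0 \<le> (r*r*r*r) * (5/4 * (r*r) - 4 * r - 21/2) + 2 * (r*r*r)"
    using assms k by (intro add_nonneg_nonneg mult_nonneg_nonneg) auto
  have "6 * r * (- (r / 4) * ((r*r) * (r * r + r*r - 1)) + 2 * r * ((r*r) * (r*r - 1)) - r * ((r*r) * (r*r)) / 4)
     - (2 * r * ((r*r) * (2 * (r*r) - 1) + 2 * r * ((r*r) * (r*r))) + 9/4 * ((r*r) * ((r*r) * (r*r))))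
     = (r*r*r*r) * (5/4 * (r*r) - 4 * r - 21/2) + 2 * (r*r*r)"
    by (simp add: algebra_simps)
  then show ?thesis using p by linarith
qed

lemma good:
  assumes s: "s \<in> sign_patterns n" and n100: "real n \<ge> 100"
    and t3: "T3 n s \<ge> - (sqrt (real n) * (real n * real n)) / 4"
    and c4: "C4 n s \<le> real n * (real n * real n) / 4"
  shows "1/3 \<le> pi_plus n (T_mat n s)"
proof -
  define r where "r = sqrt (real n)"
  have r0: "r > 0" using n100 by (simp add: r_def)
  have rr: "r * r = real n" using n100 by (simp add: r_def)
  have r10: "r \<ge> 10" unfolding r_def using real_sqrt_le_mono[OF n100] by simp
  define L where "L = (\<Sum>i<n. \<Sum>j<n. \<bar>Am n r s i j\<bar>)"
  define SQ where "SQ = (\<Sum>i<n. \<Sum>j<n. if i = j then 0 else \<bar>Qm n s i j\<bar>)"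
  define Nm where "Nm = (\<Sum>i<n. \<Sum>j<n. Tr n s i j * Am n r s j i)"
  have Nm_eq: "Nm = - (r / 4) * (real n * (r * r + real n - 1)) + 2 * r * (real n * (real n - 1)) + T3 n s"
    unfolding Nm_def T_A[OF s] r_def by simp
  have hL: "L \<le> real n * (2 * real n - 1) + 2 * r * (real n * real n) + SQ"
    unfolding L_def SQ_def by (rule L1_bound[OF s]) (use r0 rr in auto)
  have hSQ: "2 * r * SQ \<le> 9/4 * (real n * (real n * real n))"
    using Q_abs_sq[OF r0 rr, of s] Q_sq[OF s] c4 unfolding SQ_def by linarith
  have hN: "Nm \<ge> - (r / 4) * (real n * (r * r + real n - 1)) + 2 * r * (real n * (real n - 1)) - r * (real n * real n) / 4"
    using t3 unfolding Nm_eq r_def by simp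
  have "2 * r * L \<le> 2 * r * (real n * (2 * real n - 1) + 2 * r * (real n * real n) + SQ)"
    using hL r0 by (intro mult_left_mono) auto
  also have "\<dots> = 2 * r * (real n * (2 * real n - 1) + 2 * r * (real n * real n)) + 2 * r * SQ"
    by (simp add: algebra_simps)
  also have "\<dots> \<le> 2 * r * (real n * (2 * real n - 1) + 2 * r * (real n * real n)) + 9/4 * (real n * (real n * real n))"
    using hSQ by simp
  also have "\<dots> \<le> 6 * r * (- (r / 4) * (real n * (r * r + real n - 1)) + 2 * r * (real n * (real n - 1)) - r * (real n * real n) / 4)"
    using poly_ineq[OF r10] unfolding rr .
  also have "\<dots> \<le> 6 * r * Nm" using hN r0 by (intro mult_left_mono) auto
  finally have "2 * r * L \<le> 2 * r * (3 * Nm)" by simp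
  then have L3: "L \<le> 3 * Nm" using r0 by simp
  have n0: "0 < n" using n100 by simp
  have Lpos: "L > 0"
  proof -
    have "\<bar>Am n r s 0 0\<bar> \<le> (\<Sum>j<n. \<bar>Am n r s 0 j\<bar>)" by (rule member_le_sum) (use n0 in auto)
    also have "\<dots> \<le> L" unfolding L_def
      by (rule member_le_sum[where f="\<lambda>i. \<Sum>j<n. \<bar>Am n r s i j\<bar>"]) (use n0 in \<open>auto intro: sum_nonneg\<close>)
    finally have "\<bar>Am n r s 0 0\<bar> \<le> L" .
    moreover have "Am n r s 0 0 = 2 * real n - 1" using n0 s rr by (simp add: Am_eq Qm_diag)
    ultimately show ?thesis using n100 by simp
  qed
  define Ac where "Ac i j = complex_of_real (1 / L * Am n r s i j)" for i j
  have psdA: "psd n Ac" unfolding Ac_def by (rule psd_Am) (use Lpos in simp)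
  have normA: "entry_norm1 n Ac = 1"
  proof -
    have "entry_norm1 n Ac = (\<Sum>i<n. \<Sum>j<n. 1 / L * \<bar>Am n r s i j\<bar>)"
      unfolding entry_norm1_def Ac_def norm_of_real using Lpos by (simp add: abs_mult)
    also have "\<dots> = 1 / L * L" unfolding L_def by (simp add: sum_distrib_left)
    finally show ?thesis using Lpos by simp
  qed
  have trA: "Re (mtrace_prod n (T_mat n s) Ac) = Nm / L"
  proof -
    have "mtrace_prod n (T_mat n s) Ac = complex_of_real (\<Sum>i<n. \<Sum>j<n. Tr n s i j * (1 / L * Am n r s j i))"
      unfolding mtrace_prod_def Ac_def T_mat_def Tr_def by simp
    also have "(\<Sum>i<n. \<Sum>j<n. Tr n s i j * (1 / L * Am n r s j i)) = Nm / L"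
      unfolding Nm_def by (simp add: sum_divide_distrib)
    finally show ?thesis by simp
  qed
  have mem: "Nm / L \<in> {Re (mtrace_prod n (T_mat n s) A) | A. psd n A \<and> entry_norm1 n A = 1}"
    using psdA normA trA by force
  have "1/3 \<le> Nm / L" using L3 Lpos by (simp add: field_simps)
  also have "\<dots> \<le> pi_plus n (T_mat n s)"
    unfolding pi_plus_def by (rule cSup_upper[OF mem pi_bdd])
  finally show ?thesis .
qed



lemma markov_card:
  fixes f :: "_ \<Rightarrow> real"
  assumes "finite S" "\<And>s. s \<in> S \<Longrightarrow> f s \<ge> 0"
  shows "real (card {s\<in>S. f s \<ge> c}) * c \<le> (\<Sum>s\<in>S. f s)"
proof -
  have "real (card {s\<in>S. f s \<ge> c}) * c = (\<Sum>s\<in>{s\<in>S. f s \<ge> c}. c)" by simp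
  also have "\<dots> \<le> (\<Sum>s\<in>{s\<in>S. f s \<ge> c}. f s)" by (rule sum_mono) auto
  also have "\<dots> \<le> (\<Sum>s\<in>S. f s)" by (rule sum_mono2) (use assms in auto)
  finally show ?thesis .
qed

lemma aux_div: "(x::real) > 0 \<Longrightarrow> y > 0 \<Longrightarrow> (x - c * x / y) / x = 1 - c / y"
  by (simp add: field_simps)

lemma ratio_lower:
  assumes n100: "real n \<ge> 100"
  shows "1 - 4528 * (inverse (real n) * inverse (real n)) \<le>
    real (card {s \<in> sign_patterns n. pi_plus n (T_mat n s) \<ge> 1/3}) / real (card (sign_patterns n))"
proof -
  let ?S = "sign_patterns n" let ?N = "real (card ?S)"
  define m where "m = real n"
  define a where "a = sqrt (real n) * (real n * real n) / 4"
  define b where "b = real n * (real n * real n) / 4"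
  define B1 where "B1 = {s\<in>?S. (T3 n s)^2 \<ge> a^2}"
  define B2 where "B2 = {s\<in>?S. (C4 n s)^2 \<ge> b^2}"
  define G where "G = {s \<in> ?S. pi_plus n (T_mat n s) \<ge> 1/3}"
  have fin: "finite ?S" by (rule sp_finite)
  have Npos: "?N > 0" using sp_finite sp_nonempty by (simp add: card_gt_0_iff)
  have m0: "m > 0" using n100 by (simp add: m_def)
  have a0: "a \<ge> 0" and b0: "b \<ge> 0" by (auto simp: a_def b_def)
  have ss: "sqrt (real n) * sqrt (real n) = m" by (simp add: m_def)
  have a2: "a^2 = m * (m * m) * (m * m) / 16"
    unfolding a_def power_mult_distrib power_divide m_def by (simp add: power2_eq_square)
  have b2: "b^2 = (m * m * m) * (m * m * m) / 16"
    unfolding b_def power_mult_distrib power_divide m_def by (simp add: power2_eq_square)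
  have sub: "?S - (B1 \<union> B2) \<subseteq> G"
  proof
    fix s assume sS: "s \<in> ?S - (B1 \<union> B2)"
    then have s: "s \<in> ?S" and n1: "(T3 n s)^2 < a^2" and n2: "(C4 n s)^2 < b^2"
      by (auto simp: B1_def B2_def)
    have "\<bar>T3 n s\<bar> < a" using power2_less_imp_less[of "\<bar>T3 n s\<bar>" a] n1 a0 by simp
    then have t3: "T3 n s \<ge> - a" by linarith
    have "\<bar>C4 n s\<bar> < b" using power2_less_imp_less[of "\<bar>C4 n s\<bar>" b] n2 b0 by simp
    then have c4: "C4 n s \<le> b" by linarith
    have "1/3 \<le> pi_plus n (T_mat n s)"
      by (rule good[OF s n100]) (use t3 c4 in \<open>auto simp: a_def b_def\<close>)
    then show "s \<in> G" using s by (simp add: G_def)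
  qed
  have cB1: "real (card B1) * a^2 \<le> 27 * real n ^ 3 * ?N"
    using markov_card[OF fin, of "\<lambda>s. (T3 n s)^2" "a^2"] T3_moment[of n] unfolding B1_def by simp
  have cB2: "real (card B2) * b^2 \<le> 256 * real n ^ 4 * ?N"
    using markov_card[OF fin, of "\<lambda>s. (C4 n s)^2" "b^2"] C4_moment[of n] unfolding B2_def by simp
  have n3: "real n ^ 3 = m * m * m" by (simp add: m_def power3_eq_cube)
  have n4: "real n ^ 4 = m * m * m * m" by (simp add: m_def power4_eq_xxxx)
  have e1: "real (card B1) * (m * m) \<le> 432 * ?N"
  proof -
    have x: "(m * m * m) * (real (card B1) * (m * m)) = 16 * (real (card B1) * a^2)"
      unfolding a2 by (simp add: mult_ac)
    have y: "(m * m * m) * (432 * ?N) = 16 * (27 * real n ^ 3 * ?N)"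
      unfolding n3 by (simp add: mult_ac)
    have "(m * m * m) * (real (card B1) * (m * m)) \<le> (m * m * m) * (432 * ?N)"
      unfolding x y using cB1 by linarith
    moreover have "0 < m * m * m" using m0 by simp
    ultimately show ?thesis by (rule mult_left_le_imp_le)
  qed
  have e2: "real (card B2) * (m * m) \<le> 4096 * ?N"
  proof -
    have x: "(m * m * m * m) * (real (card B2) * (m * m)) = 16 * (real (card B2) * b^2)"
      unfolding b2 by (simp add: mult_ac)
    have y: "(m * m * m * m) * (4096 * ?N) = 16 * (256 * real n ^ 4 * ?N)"
      unfolding n4 by (simp add: mult_ac)
    have "(m * m * m * m) * (real (card B2) * (m * m)) \<le> (m * m * m * m) * (4096 * ?N)"
      unfolding x y using cB2 by linarith
    moreover have "0 < m * m * m * m" using m0 by simp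
    ultimately show ?thesis by (rule mult_left_le_imp_le)
  qed
  have "?N - real (card B1) - real (card B2) \<le> real (card (?S - (B1 \<union> B2)))"
  proof -
    have fB: "finite (B1 \<union> B2)" using fin by (auto simp: B1_def B2_def)
    have "card ?S \<le> card ((?S - (B1 \<union> B2)) \<union> (B1 \<union> B2))"
      by (rule card_mono) (use fin fB in auto)
    also have "\<dots> \<le> card (?S - (B1 \<union> B2)) + card (B1 \<union> B2)" by (rule card_Un_le)
    finally have "card ?S \<le> card (?S - (B1 \<union> B2)) + card (B1 \<union> B2)" .
    moreover have "card (B1 \<union> B2) \<le> card B1 + card B2" by (rule card_Un_le)
    ultimately show ?thesis by linarith
  qed
  also have "\<dots> \<le> real (card G)"
  proof -
    have "finite G" using fin by (simp add: G_def)
    then show ?thesis using card_mono[OF _ sub] by simp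
  qed
  finally have cG: "?N - real (card B1) - real (card B2) \<le> real (card G)" .
  have mm: "0 < m * m" using m0 by simp
  have f1: "real (card B1) \<le> 432 * ?N / (m * m)" using e1 mm by (simp only: pos_le_divide_eq)
  have f2: "real (card B2) \<le> 4096 * ?N / (m * m)" using e2 mm by (simp only: pos_le_divide_eq)
  have d: "4528 * ?N / (m * m) = 432 * ?N / (m * m) + 4096 * ?N / (m * m)"
    by (simp only: add_divide_distrib[symmetric]) simp
  have "?N - 4528 * ?N / (m * m) \<le> real (card G)" using cG f1 f2 d by linarith
  then have "(?N - 4528 * ?N / (m * m)) / ?N \<le> real (card G) / ?N"
    using Npos by (intro divide_right_mono) auto
  moreover have "(?N - 4528 * ?N / (m * m)) / ?N = 1 - 4528 * (inverse (real n) * inverse (real n))"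
  proof -
    have "(?N - 4528 * ?N / (m * m)) / ?N = 1 - 4528 / (m * m)" by (rule aux_div[OF Npos mm])
    also have "\<dots> = 1 - 4528 * (inverse (real n) * inverse (real n))"
      by (simp add: m_def divide_inverse inverse_mult_distrib)
    finally show ?thesis .
  qed
  ultimately show ?thesis unfolding G_def by simp
qed

lemma ratio_upper:
  "real (card {s \<in> sign_patterns n. pi_plus n (T_mat n s) \<ge> 1/3}) / real (card (sign_patterns n)) \<le> 1"
proof -
  have "card {s \<in> sign_patterns n. pi_plus n (T_mat n s) \<ge> 1/3} \<le> card (sign_patterns n)"
    by (rule card_mono[OF sp_finite]) auto
  moreover have "card (sign_patterns n) > 0" using sp_finite sp_nonempty by (simp add: card_gt_0_iff)
  ultimately show ?thesis by (simp add: divide_le_eq_1)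
qed

theorem lemma1:
  shows "(\<lambda>n. real (card {s \<in> sign_patterns n. pi_plus n (T_mat n s) \<ge> 1/3})
              / real (card (sign_patterns n))) \<longlonglongrightarrow> 1"
proof (rule tendsto_sandwich[of "\<lambda>n. 1 - 4528 * (inverse (real n) * inverse (real n))" _ _ "\<lambda>n. 1"])
  show "\<forall>\<^sub>F n in sequentially. 1 - 4528 * (inverse (real n) * inverse (real n)) \<le>
    real (card {s \<in> sign_patterns n. pi_plus n (T_mat n s) \<ge> 1/3}) / real (card (sign_patterns n))"
    unfolding eventually_sequentially by (rule exI[of _ 100]) (intro allI impI ratio_lower, simp)
  show "\<forall>\<^sub>F n in sequentially. real (card {s \<in> sign_patterns n. pi_plus n (T_mat n s) \<ge> 1/3}) / real (card (sign_patterns n)) \<le> 1"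
    by (intro always_eventually allI ratio_upper)
  have "(\<lambda>n. inverse (real n) * inverse (real n)) \<longlonglongrightarrow> 0 * 0"
    by (intro tendsto_mult lim_inverse_n)
  then have "(\<lambda>n. 1 - 4528 * (inverse (real n) * inverse (real n))) \<longlonglongrightarrow> 1 - 4528 * (0 * 0)"
    by (rule tendsto_diff[OF tendsto_const tendsto_mult[OF tendsto_const]])
  then show "(\<lambda>n. 1 - 4528 * (inverse (real n) * inverse (real n))) \<longlonglongrightarrow> 1" by simp
qed simp

end
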